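(* Let $X$ be a real Banach space. Then the set $\mathcal{F}(X)$ of Flinn elements of $X$ is norm-closed in $X$.
   Context: A bounded linear operator $T:X\to X$ on a real Banach space is numerically positive if for every $x\in X$ and every $x^*\in X^*$ with $\|x^*\|^2=\|x\|^2=x^*(x)$ one has $x^*(Tx)\ge 0$. An element $u\in X$ is a Flinn element if there is a numerically positive linear projection of $X$ onto $\operatorname{span}\{u\}$; for $u\neq 0$ this means there exists $f\in X^*$ with $f(u)=1$ such that the map $f\otimes u: x\mapsto f(x)u$ is numerically positive. The element $0$ is a Flinn element. $\mathcal{F}(X)$ denotes the set of all Flinn elements of $X$. *)

theory Defs
  imports "HOL-Analysis.Analysis"
begin

definition numerically_positive :: "('a::real_normed_vector \<Rightarrow> 'a) \<Rightarrow> bool" where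
  "numerically_positive T \<longleftrightarrow> bounded_linear T \<and>
     (\<forall>x. \<forall>xs :: 'a \<Rightarrow>\<^sub>L real.
        (norm xs)\<^sup>2 = (norm x)\<^sup>2 \<and> (norm x)\<^sup>2 = blinfun_apply xs x
          \<longrightarrow> blinfun_apply xs (T x) \<ge> 0)"

definition flinn_element :: "'a::real_normed_vector \<Rightarrow> bool" where
  "flinn_element u \<longleftrightarrow> u = 0 \<or>
     (\<exists>f :: 'a \<Rightarrow>\<^sub>L real. blinfun_apply f u = 1 \<and>
        numerically_positive (\<lambda>x. blinfun_apply f x *\<^sub>R u))"

definition flinn_set :: "'a::real_normed_vector set" where
  "flinn_set = {u. flinn_element u}"

end

theory Submission
  imports Defs
begin
definition sublin :: "('a::real_vector \<Rightarrow> real) \<Rightarrow> bool" where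
  "sublin p \<longleftrightarrow> (\<forall>x y. p (x + y) \<le> p x + p y) \<and> (\<forall>c x. c > 0 \<longrightarrow> p (c *\<^sub>R x) = c * p x)"

lemma sublin_0: "sublin p \<Longrightarrow> p 0 = 0"
proof -
  assume "sublin p"
  hence "p ((2::real) *\<^sub>R 0) = 2 * p 0" unfolding sublin_def by (metis zero_less_numeral)
  thus ?thesis by simp
qed

lemma sublin_neg: "sublin p \<Longrightarrow> - p (- x) \<le> p x"
proof -
  assume s: "sublin p"
  have "p (x + - x) \<le> p x + p (-x)" using s unfolding sublin_def by blast
  thus ?thesis using sublin_0[OF s] by simp
qed

definition shiftf :: "('a::real_vector \<Rightarrow> real) \<Rightarrow> 'a \<Rightarrow> 'a \<Rightarrow> real" where
  "shiftf q y x = Inf ((\<lambda>t. q (x + t *\<^sub>R y) - t * q y) ` {0..})"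

lemma shiftf_props:
  assumes s: "sublin q"
  shows "sublin (shiftf q y)" "\<And>x. shiftf q y x \<le> q x" "shiftf q y (- y) \<le> - q y"
proof -
  have add: "\<And>a b. q (a + b) \<le> q a + q b" and hom: "\<And>c a. c > 0 \<Longrightarrow> q (c *\<^sub>R a) = c * q a"
    using s unfolding sublin_def by auto
  have q0: "q 0 = 0" using sublin_0[OF s] .
  have homt: "q (t *\<^sub>R a) = t * q a" if "t \<ge> 0" for t a
    using that hom q0 by (cases "t = 0") auto
  have lb: "- q (- x) \<le> q (x + t *\<^sub>R y) - t * q y" if "t \<ge> 0" for x t
  proof -
    have "q (t *\<^sub>R y) \<le> q (x + t *\<^sub>R y) + q (- x)" using add[of "x + t *\<^sub>R y" "- x"] by simp
    thus ?thesis using homt[OF that] by simp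
  qed
  have bdd: "bdd_below ((\<lambda>t. q (x + t *\<^sub>R y) - t * q y) ` {0..})" for x
    using lb by (intro bdd_belowI2[where m="- q (- x)"]) auto
  have le: "shiftf q y x \<le> q (x + t *\<^sub>R y) - t * q y" if "t \<ge> 0" for x t
    unfolding shiftf_def using that bdd by (intro cInf_lower) auto
  have ge: "z \<le> shiftf q y x" if "\<And>t. t \<ge> 0 \<Longrightarrow> z \<le> q (x + t *\<^sub>R y) - t * q y" for z x
    unfolding shiftf_def using that by (intro cInf_greatest) auto
  show "shiftf q y x \<le> q x" for x using le[of 0 x] by simp
  show "shiftf q y (- y) \<le> - q y" using le[of 1 "- y"] q0 by simp
  show "sublin (shiftf q y)"
    unfolding sublin_def
  proof (intro conjI allI impI)
    fix a b
    have "shiftf q y (a + b) - shiftf q y b \<le> q (a + t1 *\<^sub>R y) - t1 * q y" if t1: "t1 \<ge> 0" for t1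
    proof -
      have "shiftf q y (a + b) - (q (a + t1 *\<^sub>R y) - t1 * q y) \<le> q (b + t2 *\<^sub>R y) - t2 * q y"
        if t2: "t2 \<ge> 0" for t2
      proof -
        have "shiftf q y (a + b) \<le> q ((a + b) + (t1 + t2) *\<^sub>R y) - (t1 + t2) * q y"
          using le t1 t2 by simp
        also have "q ((a + b) + (t1 + t2) *\<^sub>R y) \<le> q (a + t1 *\<^sub>R y) + q (b + t2 *\<^sub>R y)"
          using add[of "a + t1 *\<^sub>R y" "b + t2 *\<^sub>R y"] by (simp add: algebra_simps)
        finally show ?thesis by (simp add: algebra_simps)
      qed
      hence "shiftf q y (a + b) - (q (a + t1 *\<^sub>R y) - t1 * q y) \<le> shiftf q y b"
        by (intro ge) auto
      thus ?thesis by simp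
    qed
    hence "shiftf q y (a + b) - shiftf q y b \<le> shiftf q y a" by (intro ge) auto
    thus "shiftf q y (a + b) \<le> shiftf q y a + shiftf q y b" by simp
  next
    fix c :: real and x assume c: "c > 0"
    have "shiftf q y (c *\<^sub>R x) / c \<le> q (x + t *\<^sub>R y) - t * q y" if t: "t \<ge> 0" for t
    proof -
      have "shiftf q y (c *\<^sub>R x) \<le> q (c *\<^sub>R x + (c * t) *\<^sub>R y) - (c * t) * q y"
        using le c t by simp
      also have "q (c *\<^sub>R x + (c * t) *\<^sub>R y) = c * q (x + t *\<^sub>R y)"
        using hom[OF c, of "x + t *\<^sub>R y"] by (simp add: algebra_simps)
      finally show ?thesis using c by (simp add: field_simps)
    qed
    hence 1: "shiftf q y (c *\<^sub>R x) / c \<le> shiftf q y x" by (intro ge) auto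
    have "c * shiftf q y x \<le> q (c *\<^sub>R x + t *\<^sub>R y) - t * q y" if t: "t \<ge> 0" for t
    proof -
      have "shiftf q y x \<le> q (x + (t / c) *\<^sub>R y) - (t / c) * q y"
        using le[of "t / c" x] c t by simp
      also have "q (c *\<^sub>R x + t *\<^sub>R y) = c * q (x + (t / c) *\<^sub>R y)"
        using hom[OF c, of "x + (t / c) *\<^sub>R y"] c by (simp add: algebra_simps)
      ultimately show ?thesis using c by (simp add: field_simps)
    qed
    hence 2: "c * shiftf q y x \<le> shiftf q y (c *\<^sub>R x)" by (intro ge) auto
    show "shiftf q y (c *\<^sub>R x) = c * shiftf q y x" using 1 2 c by (simp add: field_simps)
  qed
qed

lemma sublin_min_exists:
  assumes p: "sublin (p :: 'a::real_vector \<Rightarrow> real)"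
  shows "\<exists>m \<in> {q. sublin q \<and> q \<le> p}. \<forall>a \<in> {q. sublin q \<and> q \<le> p}. a \<le> m \<longrightarrow> a = m"
proof -
  let ?A = "{q. sublin q \<and> q \<le> p}"
  let ?P = "\<lambda>a b :: 'a \<Rightarrow> real. b \<le> a"
  have po: "partial_order_on ?A (relation_of ?P ?A)"
    by (rule partial_order_on_relation_ofI) auto
  have ch: "\<exists>u \<in> ?A. \<forall>a \<in> C. ?P a u" if C: "C \<in> Chains (relation_of ?P ?A)" for C
  proof (cases "C = {}")
    case True thus ?thesis using p by auto
  next
    case False
    have CA: "C \<subseteq> ?A" using C unfolding Chains_def relation_of_def by auto
    have tot: "a \<le> b \<or> b \<le> a" if "a \<in> C" "b \<in> C" for a b
      using C that unfolding Chains_def relation_of_def by auto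
    define u where "u x = Inf ((\<lambda>q. q x) ` C)" for x
    have bdd: "bdd_below ((\<lambda>q. q x) ` C)" for x
    proof (intro bdd_belowI2[where m="- p (- x)"])
      fix q assume "q \<in> C"
      hence "sublin q" "q \<le> p" using CA by auto
      thus "- p (- x) \<le> q x" using sublin_neg[of q x] by (auto simp: le_fun_def) (smt (verit))
    qed
    have le: "u x \<le> q x" if "q \<in> C" for q x
      unfolding u_def using that bdd by (intro cInf_lower) auto
    have ge: "z \<le> u x" if "\<And>q. q \<in> C \<Longrightarrow> z \<le> q x" for z x
      unfolding u_def using that False by (intro cInf_greatest) auto
    have qs: "sublin q" if "q \<in> C" for q using that CA by auto
    have "sublin u"
      unfolding sublin_def
    proof (intro conjI allI impI)
      fix x y
      have "u (x + y) \<le> q1 x + q2 y" if "q1 \<in> C" "q2 \<in> C" for q1 q2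
      proof (cases "q1 \<le> q2")
        case True
        have "u (x + y) \<le> q1 (x + y)" using le that by blast
        also have "\<dots> \<le> q1 x + q1 y" using qs[OF that(1)] unfolding sublin_def by blast
        also have "\<dots> \<le> q1 x + q2 y" using True by (auto simp: le_fun_def)
        finally show ?thesis .
      next
        case F: False
        hence True: "q2 \<le> q1" using tot that by blast
        have "u (x + y) \<le> q2 (x + y)" using le that by blast
        also have "\<dots> \<le> q2 x + q2 y" using qs[OF that(2)] unfolding sublin_def by blast
        also have "\<dots> \<le> q1 x + q2 y" using True by (auto simp: le_fun_def)
        finally show ?thesis .
      qed
      hence "u (x + y) - q2 y \<le> u x" if "q2 \<in> C" for q2 using that
        by (intro ge) (smt (verit))
      hence "u (x + y) - u x \<le> u y" by (intro ge) (smt (verit))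
      thus "u (x + y) \<le> u x + u y" by simp
    next
      fix c :: real and x assume c: "c > 0"
      have "u (c *\<^sub>R x) / c \<le> u x"
      proof (intro ge)
        fix q assume q: "q \<in> C"
        have "u (c *\<^sub>R x) \<le> c * q x" using le[OF q, of "c *\<^sub>R x"] qs[OF q] c
          unfolding sublin_def by auto
        thus "u (c *\<^sub>R x) / c \<le> q x" using c by (simp add: field_simps)
      qed
      moreover have "c * u x \<le> u (c *\<^sub>R x)"
      proof (intro ge)
        fix q assume q: "q \<in> C"
        have "u x \<le> q x" using le[OF q] .
        moreover have "q (c *\<^sub>R x) = c * q x" using qs[OF q] c unfolding sublin_def by auto
        ultimately show "c * u x \<le> q (c *\<^sub>R x)" using c by simp
      qed
      ultimately show "u (c *\<^sub>R x) = c * u x" using c by (simp add: field_simps)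
    qed
    moreover have "u \<le> p"
    proof -
      obtain q where "q \<in> C" using False by auto
      thus ?thesis using le CA by (force simp: le_fun_def intro: order_trans)
    qed
    moreover have "\<forall>a \<in> C. u \<le> a" using le by (auto simp: le_fun_def)
    ultimately show ?thesis by blast
  qed
  show ?thesis using predicate_Zorn[OF po ch] by blast
qed

lemma sublin_min_linear:
  assumes q: "sublin q" and min: "\<And>a. sublin a \<Longrightarrow> a \<le> q \<Longrightarrow> a = q"
  shows "linear q"
proof -
  have odd: "q (- y) = - q y" for y
  proof -
    have "shiftf q y = q" using min shiftf_props[OF q, of y] by (auto simp: le_fun_def)
    hence "q (- y) \<le> - q y" using shiftf_props(3)[OF q, of y] by simp
    thus ?thesis using sublin_neg[OF q, of y] by simp
  qed
  have add: "q (x + y) = q x + q y" for x y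
  proof -
    have "q (x + y) \<le> q x + q y" using q unfolding sublin_def by blast
    moreover have "q (- x + - y) \<le> q (- x) + q (- y)" using q unfolding sublin_def by blast
    hence "- q (x + y) \<le> - q x - q y" using odd[of "x + y"] odd[of x] odd[of y] by (simp add: algebra_simps)
    ultimately show ?thesis by simp
  qed
  have sc: "q (c *\<^sub>R x) = c * q x" for c x
  proof -
    consider "c > 0" | "c = 0" | "c < 0" by linarith
    thus ?thesis
    proof cases
      case 1 thus ?thesis using q unfolding sublin_def by blast
    next
      case 2 thus ?thesis using sublin_0[OF q] by simp
    next
      case 3
      have "q ((- c) *\<^sub>R x) = (- c) * q x" using q 3 unfolding sublin_def by (metis neg_0_less_iff_less)
      thus ?thesis using odd[of "(- c) *\<^sub>R x"] by simp
    qed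
  qed
  show ?thesis by (rule linearI) (use add sc in auto)
qed

lemma hahn_banach_sublin:
  assumes p: "sublin (p :: 'a::real_vector \<Rightarrow> real)"
  shows "\<exists>g. linear g \<and> (\<forall>x. g x \<le> p x) \<and> g x0 = p x0"
proof -
  let ?p = "shiftf p x0"
  have sp: "sublin ?p" "\<And>x. ?p x \<le> p x" "?p (- x0) \<le> - p x0" using shiftf_props[OF p] by auto
  obtain m where m: "sublin m" "m \<le> ?p" and mm: "\<And>a. sublin a \<Longrightarrow> a \<le> ?p \<Longrightarrow> a \<le> m \<Longrightarrow> a = m"
    using sublin_min_exists[OF sp(1)] by blast
  have lin: "linear m"
    by (rule sublin_min_linear[OF m(1)]) (use mm m(2) in \<open>force intro: order_trans\<close>)
  have "m x \<le> p x" for x using m(2) sp(2)[of x] by (auto simp: le_fun_def intro: order_trans)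
  moreover have "m (- x0) \<le> - p x0" using m(2) sp(3) by (auto simp: le_fun_def intro: order_trans)
  hence "m x0 \<ge> p x0" using linear_neg[OF lin, of x0] by simp
  ultimately show ?thesis using lin by (intro exI[of _ m]) (auto intro: antisym)
qed

lemma norming_functional:
  fixes x0 :: "'a::real_normed_vector"
  shows "\<exists>xs :: 'a \<Rightarrow>\<^sub>L real. norm xs = norm x0 \<and> blinfun_apply xs x0 = (norm x0)\<^sup>2"
proof -
  have "sublin (\<lambda>x::'a. norm x0 * norm x)"
    unfolding sublin_def by (auto simp: norm_triangle_ineq mult_left_mono distrib_left[symmetric])
  then obtain g where g: "linear g" "\<And>x. g x \<le> norm x0 * norm x" "g x0 = norm x0 * norm x0"
    using hahn_banach_sublin by blast
  have ab: "\<bar>g x\<bar> \<le> norm x * norm x0" for x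
    using g(2)[of x] g(2)[of "- x"] linear_neg[OF g(1), of x] by (simp add: abs_le_iff mult.commute)
  have bl: "bounded_linear g"
    using g(1) ab by (intro bounded_linear_intro[where K="norm x0"]) (auto simp: linear_add linear_scale)
  define xs where "xs = Blinfun g"
  have app: "blinfun_apply xs = g" unfolding xs_def using bl by (simp add: bounded_linear_Blinfun_apply)
  have n1: "norm xs \<le> norm x0"
    by (rule norm_blinfun_bound) (use ab app in \<open>auto simp: mult.commute\<close>)
  have n2: "norm x0 \<le> norm xs"
  proof (cases "x0 = 0")
    case True thus ?thesis by simp
  next
    case False
    have "norm x0 * norm x0 \<le> norm xs * norm x0"
      using norm_blinfun[of xs x0] app g(3) by simp
    thus ?thesis using False by simp
  qed
  show ?thesis using n1 n2 app g(3) by (intro exI[of _ xs]) (simp add: power2_eq_square)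
qed

lemma flinn_norm_ineq:
  fixes u :: "'a::real_normed_vector" and f :: "'a \<Rightarrow>\<^sub>L real"
  assumes np: "numerically_positive (\<lambda>x. blinfun_apply f x *\<^sub>R u)"
  shows "norm x \<le> norm (x + blinfun_apply f x *\<^sub>R u)"
proof (cases "x = 0")
  case True thus ?thesis by simp
next
  case False
  obtain xs :: "'a \<Rightarrow>\<^sub>L real" where xs: "norm xs = norm x" "blinfun_apply xs x = (norm x)\<^sup>2"
    using norming_functional by blast
  have "blinfun_apply xs (blinfun_apply f x *\<^sub>R u) \<ge> 0"
    using np xs unfolding numerically_positive_def by auto
  hence "(norm x)\<^sup>2 \<le> blinfun_apply xs (x + blinfun_apply f x *\<^sub>R u)"
    using xs by (simp add: blinfun.add_right)
  also have "\<dots> \<le> norm xs * norm (x + blinfun_apply f x *\<^sub>R u)"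
    using norm_blinfun[of xs] abs_le_iff by (smt (verit) real_norm_def)
  finally have "norm x * norm x \<le> norm x * norm (x + blinfun_apply f x *\<^sub>R u)"
    using xs by (simp add: power2_eq_square)
  thus ?thesis using False by simp
qed

lemma flinn_bound:
  fixes u :: "'a::real_normed_vector" and f :: "'a \<Rightarrow>\<^sub>L real"
  assumes np: "numerically_positive (\<lambda>x. blinfun_apply f x *\<^sub>R u)" and fu: "blinfun_apply f u = 1"
  shows "\<bar>blinfun_apply f y\<bar> * norm u \<le> 4 * norm y"
proof -
  have pos: "blinfun_apply f z * norm u \<le> 4 * norm z" for z
  proof (cases "blinfun_apply f z > 0")
    case False thus ?thesis by (smt (verit) mult_nonpos_nonneg norm_ge_zero)
  next
    case True
    define a where "a = blinfun_apply f z"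
    define x where "x = u - (2 / a) *\<^sub>R z"
    have fx: "blinfun_apply f x = -1" unfolding x_def using fu True
      by (simp add: blinfun.diff_right blinfun.scaleR_right a_def)
    have "norm x \<le> norm (x + blinfun_apply f x *\<^sub>R u)" by (rule flinn_norm_ineq[OF np])
    also have "x + blinfun_apply f x *\<^sub>R u = - ((2 / a) *\<^sub>R z)" using fx unfolding x_def by simp
    finally have 1: "norm x \<le> (2 / a) * norm z" using True a_def by simp
    have "norm u \<le> norm x + norm ((2 / a) *\<^sub>R z)" unfolding x_def
      by (metis add.commute diff_add_cancel norm_triangle_ineq)
    also have "\<dots> \<le> (4 / a) * norm z" using 1 True a_def by simp
    finally have "norm u \<le> (4 / a) * norm z" .
    hence "a * norm u \<le> a * ((4 / a) * norm z)" using True a_def by (intro mult_left_mono) auto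
    thus ?thesis using True a_def by simp
  qed
  show ?thesis using pos[of y] pos[of "- y"] by (simp add: blinfun.minus_right abs_if split: if_splits)
qed

lemma cluster_closed:
  fixes h :: "nat \<Rightarrow> 'b::topological_space"
  assumes nb: "inf (nhds \<phi>) (filtermap h sequentially) \<noteq> bot"
    and C: "closed C" and ev: "eventually (\<lambda>m. h m \<in> C) sequentially"
  shows "\<phi> \<in> C"
proof (rule ccontr)
  assume "\<phi> \<notin> C"
  hence "eventually (\<lambda>\<psi>. \<psi> \<in> - C) (nhds \<phi>)" using C
    by (intro eventually_nhds_in_open) (auto simp: closed_def)
  moreover have "eventually (\<lambda>\<psi>. \<psi> \<in> C) (filtermap h sequentially)"
    using ev by (simp add: eventually_filtermap)
  ultimately have "eventually (\<lambda>_. False) (inf (nhds \<phi>) (filtermap h sequentially))"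
    unfolding eventually_inf by blast
  thus False using nb by (simp add: eventually_False)
qed

theorem proposition2p4:
  shows "closed (flinn_set :: 'a::banach set)"
  unfolding closed_sequential_limits
proof (intro allI impI, elim conjE)
  fix u :: "nat \<Rightarrow> 'a" and l :: 'a
  assume uf: "\<forall>n. u n \<in> flinn_set" and lim: "u \<longlonglongrightarrow> l"
  show "l \<in> flinn_set"
  proof (cases "l = 0")
    case True thus ?thesis by (simp add: flinn_set_def flinn_element_def)
  next
    case l0: False
    have "eventually (\<lambda>m. norm (u m) > norm l / 2) sequentially"
      using tendsto_norm[OF lim] l0 by (intro order_tendstoD) auto
    then obtain N where N: "\<And>m. m \<ge> N \<Longrightarrow> norm (u m) > norm l / 2"
      unfolding eventually_sequentially by blast
    have "\<exists>f :: 'a \<Rightarrow>\<^sub>L real. blinfun_apply f (u m) = 1 \<and> numerically_positive (\<lambda>x. blinfun_apply f x *\<^sub>R u m)"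
      if "m \<ge> N" for m
    proof -
      have "u m \<noteq> 0" using N[OF that] using norm_ge_zero[of l] by (cases "u m = 0") auto
      thus ?thesis using uf unfolding flinn_set_def flinn_element_def by auto
    qed
    then obtain g where g: "\<And>m. m \<ge> N \<Longrightarrow> blinfun_apply (g m) (u m) = 1"
      "\<And>m. m \<ge> N \<Longrightarrow> numerically_positive (\<lambda>x. blinfun_apply (g m) x *\<^sub>R u m)"
      by metis
    define B where "B = 8 / norm l"
    have Bpos: "B > 0" using l0 by (simp add: B_def)
    have gB: "\<bar>blinfun_apply (g m) y\<bar> \<le> B * norm y" if m: "m \<ge> N" for m y
    proof -
      have 1: "\<bar>blinfun_apply (g m) y\<bar> * norm (u m) \<le> 4 * norm y" by (rule flinn_bound[OF g(2)[OF m] g(1)[OF m]])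
      have "\<bar>blinfun_apply (g m) y\<bar> * (norm l / 2) \<le> \<bar>blinfun_apply (g m) y\<bar> * norm (u m)"
        using N[OF m] by (intro mult_left_mono) auto
      hence "\<bar>blinfun_apply (g m) y\<bar> * norm l \<le> 8 * norm y" using 1 by simp
      thus ?thesis using l0 unfolding B_def by (simp add: field_simps)
    qed
    define h where "h m = (if m \<ge> N then blinfun_apply (g m) else (\<lambda>_. 0))" for m
    have hB: "\<bar>h m y\<bar> \<le> B * norm y" for m y using gB Bpos unfolding h_def by auto
    have hadd: "h m (x + y) = h m x + h m y" for m x y unfolding h_def by (simp add: blinfun.add_right)
    have hsc: "h m (c *\<^sub>R x) = c * h m x" for m c x unfolding h_def by (simp add: blinfun.scaleR_right)
    define U where "U = PiE UNIV (\<lambda>x::'a. cball (0::real) (B * norm x))"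
    have "compactin (product_topology (\<lambda>_. euclidean) UNIV) U"
      unfolding U_def compactin_PiE by auto
    hence cU: "compact U" by (metis euclidean_product_topology compactin_euclidean_iff)
    have hU: "eventually (\<lambda>\<psi>. \<psi> \<in> U) (filtermap h sequentially)"
      using hB by (simp add: eventually_filtermap U_def PiE_def)
    obtain \<phi> where \<phi>U: "\<phi> \<in> U" and nb: "inf (nhds \<phi>) (filtermap h sequentially) \<noteq> bot"
      using cU[unfolded compact_filter] hU by (metis filtermap_bot_iff trivial_limit_sequentially)
    note cl = cluster_closed[OF nb]
    have cont: "continuous_on UNIV (\<lambda>\<psi>::'a \<Rightarrow> real. \<psi> x)" for x by simp
    have \<phi>B: "\<bar>\<phi> x\<bar> \<le> B * norm x" for x using \<phi>U by (auto simp: U_def PiE_def)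
    have \<phi>add: "\<phi> (x + y) = \<phi> x + \<phi> y" for x y
      by (rule cl[of "{\<psi>. \<psi> (x + y) = \<psi> x + \<psi> y}", simplified])
        (auto intro!: closed_Collect_eq continuous_intros cont simp: hadd)
    have \<phi>sc: "\<phi> (c *\<^sub>R x) = c * \<phi> x" for c x
      by (rule cl[of "{\<psi>. \<psi> (c *\<^sub>R x) = c * \<psi> x}", simplified])
        (auto intro!: closed_Collect_eq continuous_intros cont simp: hsc)
    have dist_ev: "eventually (\<lambda>m. norm (l - u m) < e) sequentially" if "e > 0" for e
      using lim[unfolded tendsto_iff] that by (simp add: dist_norm norm_minus_commute)
    have \<phi>l: "\<phi> l = 1"
    proof -
      have "\<bar>\<phi> l - 1\<bar> \<le> e" if e: "e > 0" for e
      proof (rule cl[of "{\<psi>. \<bar>\<psi> l - 1\<bar> \<le> e}", simplified])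
        show "closed {\<psi>::'a\<Rightarrow>real. \<bar>\<psi> l - 1\<bar> \<le> e}"
          by (auto intro!: closed_Collect_le continuous_intros cont)
        have "eventually (\<lambda>m. m \<ge> N \<and> norm (l - u m) < e / B) sequentially"
          using dist_ev[of "e / B"] e Bpos eventually_ge_at_top[of N] by (auto elim: eventually_mono simp: eventually_conj_iff)
        thus "eventually (\<lambda>m. \<bar>h m l - 1\<bar> \<le> e) sequentially"
        proof (rule eventually_mono, elim conjE)
          fix m assume m: "m \<ge> N" and d: "norm (l - u m) < e / B"
          have "h m l - 1 = blinfun_apply (g m) (l - u m)"
            using g(1)[OF m] m unfolding h_def by (simp add: blinfun.diff_right)
          hence "\<bar>h m l - 1\<bar> \<le> B * norm (l - u m)" using gB[OF m] by simp
          also have "\<dots> \<le> e" using d Bpos by (simp add: field_simps)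
          finally show "\<bar>h m l - 1\<bar> \<le> e" .
        qed
      qed
      thus ?thesis by (metis abs_le_zero_iff dense_le eq_iff_diff_eq_0 linorder_not_le)
    qed
    have \<phi>np: "\<phi> x * blinfun_apply xs l \<ge> 0"
      if d: "(norm xs)\<^sup>2 = (norm x)\<^sup>2" "(norm x)\<^sup>2 = blinfun_apply xs x" for x and xs :: "'a \<Rightarrow>\<^sub>L real"
    proof -
      define K where "K = B * norm x * norm xs + 1"
      have K: "K > 0" proof - have "0 \<le> B * norm x * norm xs" using Bpos by simp thus ?thesis unfolding K_def by linarith qed
      have "- e \<le> \<phi> x * blinfun_apply xs l" if e: "e > 0" for e
      proof (rule cl[of "{\<psi>. - e \<le> \<psi> x * blinfun_apply xs l}", simplified])
        show "closed {\<psi>::'a\<Rightarrow>real. - e \<le> \<psi> x * blinfun_apply xs l}"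
          by (auto intro!: closed_Collect_le continuous_intros cont)
        have "eventually (\<lambda>m. m \<ge> N \<and> norm (l - u m) < e / K) sequentially"
          using dist_ev[of "e / K"] e K eventually_ge_at_top[of N] by (auto elim: eventually_mono simp: eventually_conj_iff)
        thus "eventually (\<lambda>m. - e \<le> h m x * blinfun_apply xs l) sequentially"
        proof (rule eventually_mono, elim conjE)
          fix m assume m: "m \<ge> N" and dd: "norm (l - u m) < e / K"
          have p0: "blinfun_apply xs (blinfun_apply (g m) x *\<^sub>R u m) \<ge> 0"
            using g(2)[OF m] d unfolding numerically_positive_def by blast
          hence p1: "h m x * blinfun_apply xs (u m) \<ge> 0" using m unfolding h_def by (simp add: blinfun.scaleR_right)
          have "\<bar>h m x * blinfun_apply xs l - h m x * blinfun_apply xs (u m)\<bar>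
              = \<bar>h m x\<bar> * \<bar>blinfun_apply xs (l - u m)\<bar>"
            by (simp add: blinfun.diff_right abs_mult[symmetric] right_diff_distrib)
          also have "\<dots> \<le> (B * norm x) * (norm xs * norm (l - u m))"
            using hB norm_blinfun[of xs "l - u m"] using Bpos by (intro mult_mono) auto
          also have "\<dots> \<le> K * norm (l - u m)" unfolding K_def by (simp add: algebra_simps)
          also have "\<dots> \<le> e" using dd K by (simp add: field_simps)
          finally show "- e \<le> h m x * blinfun_apply xs l" using p1 by linarith
        qed
      qed
      note ee = this show ?thesis proof (rule ccontr) assume "\<not> 0 \<le> \<phi> x * blinfun_apply xs l" thus False using ee[of "- (\<phi> x * blinfun_apply xs l) / 2"] by linarith qed
    qed
    have blin: "bounded_linear \<phi>"
      by (intro bounded_linear_intro[where K=B]) (use \<phi>add \<phi>sc \<phi>B in \<open>auto simp: mult.commute\<close>)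
    define F where "F = Blinfun \<phi>"
    have Fa: "blinfun_apply F = \<phi>" unfolding F_def using blin by (simp add: bounded_linear_Blinfun_apply)
    have "numerically_positive (\<lambda>x. blinfun_apply F x *\<^sub>R l)"
      unfolding numerically_positive_def Fa
    proof (intro conjI allI impI)
      show "bounded_linear (\<lambda>x. \<phi> x *\<^sub>R l)"
        by (rule bounded_linear_compose[OF bounded_linear_scaleR_left blin])
    next
      fix x and xs :: "'a \<Rightarrow>\<^sub>L real"
      assume "(norm xs)\<^sup>2 = (norm x)\<^sup>2 \<and> (norm x)\<^sup>2 = blinfun_apply xs x"
      thus "0 \<le> blinfun_apply xs (\<phi> x *\<^sub>R l)" using \<phi>np by (simp add: blinfun.scaleR_right)
    qed
    thus ?thesis using \<phi>l Fa unfolding flinn_set_def flinn_element_def by auto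
  qed
qed

end
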